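(* For all $U,U_0\in\mathbb{O}_+(p,r)$, $$\|\mathcal{A}(U)-\mathcal{A}(U_0)\|_F\le 2\|U-U_0\|_F .$$
   Context: Fix $1\le r\le p$. $\mathbb{O}(p,r)=\{U\in\mathbb{R}^{p\times r}:U^TU=I_r\}$ and $\mathbb{O}_+(p,r)=\{U=\begin{bmatrix}Q_1\\Q_2\end{bmatrix}\in\mathbb{O}(p,r): Q_1\in\mathbb{R}^{r\times r}\text{ symmetric positive definite}\}$. The inverse Cayley parameterization is the map $\mathcal{A}:\mathbb{O}_+(p,r)\to\mathbb{R}^{(p-r)\times r}$, $\mathcal{A}(U)=Q_2(I_r+Q_1)^{-1}$ for $U=\begin{bmatrix}Q_1\\Q_2\end{bmatrix}$. $\|\cdot\|_F$ is the Frobenius norm. *)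

theory Defs
  imports "Jordan_Normal_Form.Matrix"
begin

definition orth_frame :: "nat \<Rightarrow> nat \<Rightarrow> real mat set" where
  "orth_frame p r = {U. U \<in> carrier_mat p r \<and> transpose_mat U * U = 1\<^sub>m r}"

definition sym_pos_def :: "nat \<Rightarrow> real mat \<Rightarrow> bool" where
  "sym_pos_def r Q \<longleftrightarrow> Q \<in> carrier_mat r r \<and> transpose_mat Q = Q \<and>
     (\<forall>x \<in> carrier_vec r. x \<noteq> 0\<^sub>v r \<longrightarrow> 0 < x \<bullet> (Q *\<^sub>v x))"

definition blockQ1 :: "nat \<Rightarrow> real mat \<Rightarrow> real mat" where
  "blockQ1 r U = mat r r (\<lambda>(i,j). U $$ (i,j))"

definition blockQ2 :: "nat \<Rightarrow> real mat \<Rightarrow> real mat" where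
  "blockQ2 r U = mat (dim_row U - r) r (\<lambda>(i,j). U $$ (i + r, j))"

definition orth_plus :: "nat \<Rightarrow> nat \<Rightarrow> real mat set" where
  "orth_plus p r = {U \<in> orth_frame p r. sym_pos_def r (blockQ1 r U)}"

definition mat_inv :: "nat \<Rightarrow> real mat \<Rightarrow> real mat" where
  "mat_inv r M = (THE B. B \<in> carrier_mat r r \<and> M * B = 1\<^sub>m r \<and> B * M = 1\<^sub>m r)"

definition inv_cayley :: "nat \<Rightarrow> real mat \<Rightarrow> real mat" where
  "inv_cayley r U = blockQ2 r U * mat_inv r (1\<^sub>m r + blockQ1 r U)"

definition frob_norm :: "real mat \<Rightarrow> real" where
  "frob_norm M = sqrt (\<Sum>i<dim_row M. \<Sum>j<dim_col M. (M $$ (i,j))\<^sup>2)"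

end

theory Submission
  imports Defs "HOL-Analysis.L2_Norm" "Jordan_Normal_Form.Determinant"
begin

lemma sprod_self: "(v::real vec) \<in> carrier_vec n \<Longrightarrow> v \<bullet> v = (\<Sum>i<n. (v $ i)^2)"
  unfolding scalar_prod_def by (auto simp: power2_eq_square atLeast0LessThan)

lemma sprod_self_nonneg: "0 \<le> (v::real vec) \<bullet> v"
  unfolding scalar_prod_def by (auto intro: sum_nonneg)

lemma frob_L2: "M \<in> carrier_mat m n \<Longrightarrow>
   frob_norm M = L2_set (\<lambda>(i,j). M $$ (i,j)) ({..<m} \<times> {..<n})"
  unfolding frob_norm_def L2_set_def
  by (simp add: sum.cartesian_product case_prod_beta)

lemma frob_triangle: assumes "X \<in> carrier_mat m n" "Y \<in> carrier_mat m n"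
  shows "frob_norm (X + Y) \<le> frob_norm X + frob_norm Y"
proof -
  have "frob_norm (X + Y) = L2_set (\<lambda>x. (\<lambda>(i,j). X $$ (i,j)) x + (\<lambda>(i,j). Y $$ (i,j)) x) ({..<m} \<times> {..<n})"
    using assms by (subst frob_L2[of _ m n]) (auto intro!: L2_set_cong)
  also have "\<dots> \<le> frob_norm X + frob_norm Y"
    using assms by (simp add: frob_L2[of _ m n] L2_set_triangle_ineq)
  finally show ?thesis .
qed

lemma frob_cols: "M \<in> carrier_mat m n \<Longrightarrow>
   frob_norm M = sqrt (\<Sum>j<n. col M j \<bullet> col M j)"
  unfolding frob_norm_def
  by (simp add: sprod_self[of _ m] sum.swap[of _ "{..<m}"])

lemma frob_transpose: "frob_norm (transpose_mat M) = frob_norm M"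
  unfolding frob_norm_def by (simp add: sum.swap[of _ "{..<dim_row M}"])

lemma left_contract:
  assumes M: "M \<in> carrier_mat m n" and X: "X \<in> carrier_mat n k"
    and c: "\<And>x. x \<in> carrier_vec n \<Longrightarrow> (M *\<^sub>v x) \<bullet> (M *\<^sub>v x) \<le> x \<bullet> x"
  shows "frob_norm (M * X) \<le> frob_norm X"
proof -
  have MX: "M * X \<in> carrier_mat m k" using M X by auto
  show ?thesis
    unfolding frob_cols[OF MX] frob_cols[OF X]
  proof (rule real_sqrt_le_mono, rule sum_mono)
    fix j assume "j \<in> {..<k}"
    hence "col (M * X) j = M *\<^sub>v col X j" using col_mult2[OF M X] by simp
    moreover have "col X j \<in> carrier_vec n" using X by auto
    ultimately show "col (M * X) j \<bullet> col (M * X) j \<le> col X j \<bullet> col X j" using c by simp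
  qed
qed

lemma right_contract:
  assumes X: "X \<in> carrier_mat m n" and N: "N \<in> carrier_mat n n"
    and c: "\<And>x. x \<in> carrier_vec n \<Longrightarrow> (transpose_mat N *\<^sub>v x) \<bullet> (transpose_mat N *\<^sub>v x) \<le> x \<bullet> x"
  shows "frob_norm (X * N) \<le> frob_norm X"
proof -
  have "frob_norm (X * N) = frob_norm (transpose_mat N * transpose_mat X)"
    using transpose_mult[OF X N] frob_transpose by metis
  also have "\<dots> \<le> frob_norm (transpose_mat X)"
    by (rule left_contract[of _ n n _ m]) (use X N c in auto)
  finally show ?thesis by (simp add: frob_transpose)
qed

lemma spd_quad_nonneg: assumes "sym_pos_def r Q" "y \<in> carrier_vec r"
  shows "0 \<le> y \<bullet> (Q *\<^sub>v y)"
proof (cases "y = 0\<^sub>v r")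
  case True
  have "Q *\<^sub>v y \<in> carrier_vec r" using assms by (auto simp: sym_pos_def_def)
  thus ?thesis using True by simp
next
  case False thus ?thesis using assms unfolding sym_pos_def_def by (auto intro: less_imp_le)
qed

lemma one_plus_expand: assumes Q: "sym_pos_def r Q" and y: "y \<in> carrier_vec r"
  shows "y \<bullet> y + (Q *\<^sub>v y) \<bullet> (Q *\<^sub>v y) \<le> ((1\<^sub>m r + Q) *\<^sub>v y) \<bullet> ((1\<^sub>m r + Q) *\<^sub>v y)"
proof -
  have Qc: "Q \<in> carrier_mat r r" using Q by (simp add: sym_pos_def_def)
  have Qy: "Q *\<^sub>v y \<in> carrier_vec r" using Qc y by auto
  have e: "(1\<^sub>m r + Q) *\<^sub>v y = y + Q *\<^sub>v y"
    using Qc y by (simp add: add_mult_distrib_mat_vec[of _ r r])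
  have "(y + Q *\<^sub>v y) \<bullet> (y + Q *\<^sub>v y) = y \<bullet> y + y \<bullet> (Q *\<^sub>v y) + ((Q *\<^sub>v y) \<bullet> y + (Q *\<^sub>v y) \<bullet> (Q *\<^sub>v y))"
    using Qy y by (simp add: add_scalar_prod_distrib[of _ r] scalar_prod_add_distrib[of _ r])
  also have "(Q *\<^sub>v y) \<bullet> y = y \<bullet> (Q *\<^sub>v y)" using comm_scalar_prod[OF Qy y] .
  finally show ?thesis using e spd_quad_nonneg[OF Q y] by simp
qed

lemma inv_contract: assumes Q: "sym_pos_def r Q" and B: "B \<in> carrier_mat r r"
  and BI: "(1\<^sub>m r + Q) * B = 1\<^sub>m r" and x: "x \<in> carrier_vec r"
  shows "(B *\<^sub>v x) \<bullet> (B *\<^sub>v x) \<le> x \<bullet> x"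
proof -
  have Qc: "Q \<in> carrier_mat r r" using Q by (simp add: sym_pos_def_def)
  have "(1\<^sub>m r + Q) *\<^sub>v (B *\<^sub>v x) = x"
    using Qc B x by (simp flip: assoc_mult_mat_vec[of _ r r _ r] add: BI)
  moreover have "B *\<^sub>v x \<in> carrier_vec r" using B x by auto
  ultimately show ?thesis using one_plus_expand[OF Q, of "B *\<^sub>v x"] sprod_self_nonneg[of "Q *\<^sub>v (B *\<^sub>v x)"] by simp
qed

lemma blocks_carrier: assumes "U \<in> carrier_mat p r"
  shows "blockQ1 r U \<in> carrier_mat r r" "blockQ2 r U \<in> carrier_mat (p - r) r"
  using assms by (auto simp: blockQ1_def blockQ2_def)

lemma split_sum: "r \<le> (p::nat) \<Longrightarrow> (\<Sum>i<p. f i) = (\<Sum>i<r. f i) + (\<Sum>i<p-r. (f (i + r)::real))"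
proof -
  assume rp: "r \<le> p"
  have "(\<Sum>i<p. f i) = (\<Sum>i=0..<r. f i) + (\<Sum>i=r..<p. f i)"
    using rp by (simp add: sum.atLeastLessThan_concat lessThan_atLeast0)
  also have "(\<Sum>i=r..<p. f i) = (\<Sum>i=0+r..<(p-r)+r. f i)" using rp by simp
  also have "\<dots> = (\<Sum>i=0..<p-r. f (i + r))" by (rule sum.shift_bounds_nat_ivl)
  finally show ?thesis by (simp add: lessThan_atLeast0)
qed
lemma b1: assumes "U \<in> carrier_mat p r" "y \<in> carrier_vec r" "i < r" "r \<le> p"
  shows "(blockQ1 r U *\<^sub>v y) $ i = (U *\<^sub>v y) $ i"
  using assms by (simp add: blockQ1_def scalar_prod_def)
lemma b2: assumes "U \<in> carrier_mat p r" "y \<in> carrier_vec r" "i < p - r" "r \<le> p"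
  shows "(blockQ2 r U *\<^sub>v y) $ i = (U *\<^sub>v y) $ (i + r)"
  using assms by (simp add: blockQ2_def scalar_prod_def)

lemma orth_split: assumes U: "U \<in> orth_frame p r" and rp: "r \<le> p" and y: "y \<in> carrier_vec r"
  shows "(blockQ1 r U *\<^sub>v y) \<bullet> (blockQ1 r U *\<^sub>v y) + (blockQ2 r U *\<^sub>v y) \<bullet> (blockQ2 r U *\<^sub>v y) = y \<bullet> y"
proof -
  have Uc: "U \<in> carrier_mat p r" and UU: "transpose_mat U * U = 1\<^sub>m r" using U by (auto simp: orth_frame_def)
  have Uy: "U *\<^sub>v y \<in> carrier_vec p" using Uc y by auto
  have "(U *\<^sub>v y) \<bullet> (U *\<^sub>v y) = (transpose_mat U *\<^sub>v (U *\<^sub>v y)) \<bullet> y"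
    using transpose_vec_mult_scalar[OF Uc y Uy] by simp
  also have "transpose_mat U *\<^sub>v (U *\<^sub>v y) = y"
    using Uc y by (simp flip: assoc_mult_mat_vec[of _ r p _ r] add: UU)
  finally have 1: "(U *\<^sub>v y) \<bullet> (U *\<^sub>v y) = y \<bullet> y" .
  have "(U *\<^sub>v y) \<bullet> (U *\<^sub>v y) = (\<Sum>i<p. ((U *\<^sub>v y) $ i)^2)" using sprod_self[OF Uy] .
  also have "\<dots> = (\<Sum>i<r. ((U *\<^sub>v y) $ i)^2) + (\<Sum>i<p-r. ((U *\<^sub>v y) $ (i + r))^2)"
    by (rule split_sum[OF rp])
  also have "(\<Sum>i<r. ((U *\<^sub>v y) $ i)^2) = (\<Sum>i<r. ((blockQ1 r U *\<^sub>v y) $ i)^2)"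
    using b1[OF Uc y _ rp] by simp
  also have "\<dots> = (blockQ1 r U *\<^sub>v y) \<bullet> (blockQ1 r U *\<^sub>v y)"
    using blocks_carrier[OF Uc] y by (subst sprod_self[of _ r]) auto
  also have "(\<Sum>i<p-r. ((U *\<^sub>v y) $ (i + r))^2) = (\<Sum>i<p-r. ((blockQ2 r U *\<^sub>v y) $ i)^2)"
    using b2[OF Uc y _ rp] by simp
  also have "\<dots> = (blockQ2 r U *\<^sub>v y) \<bullet> (blockQ2 r U *\<^sub>v y)"
    using blocks_carrier[OF Uc] y by (subst sprod_self[of _ "p-r"]) auto
  finally show ?thesis using 1 by simp
qed


lemma sprod_zero_imp: assumes v: "(v::real vec) \<in> carrier_vec n" and z: "v \<bullet> v \<le> 0"
  shows "v = 0\<^sub>v n"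
proof -
  have "(\<Sum>i<n. (v $ i)^2) = 0" using z sprod_self[OF v] sprod_self_nonneg[of v] by simp
  hence "\<forall>i\<in>{..<n}. (v $ i)^2 = 0" by (subst sum_nonneg_eq_0_iff[symmetric]) auto
  thus ?thesis using v by (intro eq_vecI) auto
qed

lemma inv_exists: assumes Q: "sym_pos_def r Q"
  shows "\<exists>B. B \<in> carrier_mat r r \<and> (1\<^sub>m r + Q) * B = 1\<^sub>m r \<and> B * (1\<^sub>m r + Q) = 1\<^sub>m r"
proof -
  have Qc: "Q \<in> carrier_mat r r" using Q by (simp add: sym_pos_def_def)
  have P: "1\<^sub>m r + Q \<in> carrier_mat r r" using Qc by auto
  have "det (1\<^sub>m r + Q) \<noteq> 0"
  proof
    assume "det (1\<^sub>m r + Q) = 0"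
    then obtain v where v: "v \<in> carrier_vec r" "v \<noteq> 0\<^sub>v r" "(1\<^sub>m r + Q) *\<^sub>v v = 0\<^sub>v r"
      using det_0_iff_vec_prod_zero_field[OF P] by auto
    have "v \<bullet> v \<le> 0"
      using one_plus_expand[OF Q v(1)] v(3) sprod_self_nonneg[of "Q *\<^sub>v v"] by simp
    thus False using sprod_zero_imp[OF v(1)] v(2) by simp
  qed
  hence "1\<^sub>m r + Q \<in> Units (ring_mat TYPE(real) r ())" by (rule det_non_zero_imp_unit[OF P])
  thus ?thesis by (auto simp: Units_def ring_mat_def)
qed

lemma mat_inv_eq: assumes P: "P \<in> carrier_mat r r" and B: "B \<in> carrier_mat r r"
  and PB: "P * B = 1\<^sub>m r" and BP: "B * P = 1\<^sub>m r"
  shows "mat_inv r P = B"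
  unfolding mat_inv_def
proof (rule the_equality)
  show "B \<in> carrier_mat r r \<and> P * B = 1\<^sub>m r \<and> B * P = 1\<^sub>m r" using B PB BP by simp
  fix C assume C: "C \<in> carrier_mat r r \<and> P * C = 1\<^sub>m r \<and> C * P = 1\<^sub>m r"
  have Cc: "C \<in> carrier_mat r r" using C by simp
  have "C = C * (P * B)" using PB by (simp add: right_mult_one_mat[OF Cc])
  also have "\<dots> = (C * P) * B" using Cc P B by (metis assoc_mult_mat)
  also have "\<dots> = B" using C B by simp
  finally show "C = B" .
qed

lemma A_contract: assumes U: "U \<in> orth_plus p r" and rp: "r \<le> p"
  and N: "N \<in> carrier_mat r r" and PN: "(1\<^sub>m r + blockQ1 r U) * N = 1\<^sub>m r"
  and x: "x \<in> carrier_vec r"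
  shows "((blockQ2 r U * N) *\<^sub>v x) \<bullet> ((blockQ2 r U * N) *\<^sub>v x) \<le> x \<bullet> x"
proof -
  have Uo: "U \<in> orth_frame p r" and Q: "sym_pos_def r (blockQ1 r U)" using U by (auto simp: orth_plus_def)
  have Uc: "U \<in> carrier_mat p r" using Uo by (simp add: orth_frame_def)
  note bc = blocks_carrier[OF Uc]
  define y where "y = N *\<^sub>v x"
  have y: "y \<in> carrier_vec r" using N x by (simp add: y_def)
  have e1: "(blockQ2 r U * N) *\<^sub>v x = blockQ2 r U *\<^sub>v y"
    using bc N x by (simp add: y_def)
  have e2: "(1\<^sub>m r + blockQ1 r U) *\<^sub>v y = x"
    using bc N x by (simp flip: assoc_mult_mat_vec[of _ r r _ r] add: PN y_def)
  have "(blockQ2 r U *\<^sub>v y) \<bullet> (blockQ2 r U *\<^sub>v y) \<le> y \<bullet> y"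
    using orth_split[OF Uo rp y] sprod_self_nonneg[of "blockQ1 r U *\<^sub>v y"] by simp
  also have "\<dots> \<le> x \<bullet> x"
    using one_plus_expand[OF Q y] e2 sprod_self_nonneg[of "blockQ1 r U *\<^sub>v y"] by simp
  finally show ?thesis using e1 by simp
qed

lemma frob_blocks: assumes U: "U \<in> carrier_mat p r" and V: "V \<in> carrier_mat p r" and rp: "r \<le> p"
  shows "frob_norm (blockQ1 r U - blockQ1 r V) \<le> frob_norm (U - V)"
    "frob_norm (blockQ2 r U - blockQ2 r V) \<le> frob_norm (U - V)"
proof -
  define f where "f i = (\<Sum>j<r. ((U - V) $$ (i, j))^2)" for i
  have fn: "0 \<le> f i" for i unfolding f_def by (auto intro: sum_nonneg)
  have tot: "frob_norm (U - V) = sqrt ((\<Sum>i<r. f i) + (\<Sum>i<p-r. f (i + r)))"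
  proof -
    have "frob_norm (U - V) = sqrt (\<Sum>i<p. f i)" unfolding frob_norm_def f_def using U V by simp
    thus ?thesis by (simp only: split_sum[OF rp])
  qed
  have "frob_norm (blockQ1 r U - blockQ1 r V) = sqrt (\<Sum>i<r. f i)"
    unfolding frob_norm_def f_def using U V rp
    by (simp add: blockQ1_def)
  also have "\<dots> \<le> frob_norm (U - V)" unfolding tot
    by (rule real_sqrt_le_mono) (simp add: fn sum_nonneg)
  finally show "frob_norm (blockQ1 r U - blockQ1 r V) \<le> frob_norm (U - V)" .
  have "frob_norm (blockQ2 r U - blockQ2 r V) = sqrt (\<Sum>i<p-r. f (i + r))"
    unfolding frob_norm_def f_def using U V rp
    by (simp add: blockQ2_def)
  also have "\<dots> \<le> frob_norm (U - V)" unfolding tot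
    by (rule real_sqrt_le_mono) (simp add: fn sum_nonneg)
  finally show "frob_norm (blockQ2 r U - blockQ2 r V) \<le> frob_norm (U - V)" .
qed

lemma frob_minus_comm: assumes "U \<in> carrier_mat p r" "V \<in> carrier_mat p r"
  shows "frob_norm (U - V) = frob_norm (V - U)"
  unfolding frob_norm_def using assms by (simp add: power2_commute)


lemma transpose_one_plus: assumes Q: "sym_pos_def r Q"
  shows "transpose_mat (1\<^sub>m r + Q) = 1\<^sub>m r + Q"
proof -
  have Qc: "Q \<in> carrier_mat r r" and Qt: "transpose_mat Q = Q" using Q by (auto simp: sym_pos_def_def)
  have "Q $$ (j, i) = Q $$ (i, j)" if "i < r" "j < r" for i j
    using arg_cong[OF Qt, of "\<lambda>M. M $$ (i, j)"] that Qc by simp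
  thus ?thesis using Qc by (intro eq_matI) auto
qed

theorem theorem2:
  fixes p r :: nat and U U0 :: "real mat"
  assumes "1 \<le> r" and "r \<le> p"
    and "U \<in> orth_plus p r" and "U0 \<in> orth_plus p r"
  shows "frob_norm (inv_cayley r U - inv_cayley r U0) \<le> 2 * frob_norm (U - U0)"
proof -
  note rp = assms(2)
  have Uc: "U \<in> carrier_mat p r" and U0c: "U0 \<in> carrier_mat p r"
    using assms(3,4) by (auto simp: orth_plus_def orth_frame_def)
  have SQ: "sym_pos_def r (blockQ1 r U)" and SQ0: "sym_pos_def r (blockQ1 r U0)"
    using assms(3,4) by (auto simp: orth_plus_def)
  define Q1 where "Q1 = blockQ1 r U"
  define Q2 where "Q2 = blockQ2 r U"
  define R1 where "R1 = blockQ1 r U0"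
  define R2 where "R2 = blockQ2 r U0"
  have Q1c: "Q1 \<in> carrier_mat r r" and Q2c: "Q2 \<in> carrier_mat (p-r) r"
    and R1c: "R1 \<in> carrier_mat r r" and R2c: "R2 \<in> carrier_mat (p-r) r"
    using blocks_carrier[OF Uc] blocks_carrier[OF U0c] by (auto simp: Q1_def Q2_def R1_def R2_def)
  define P where "P = 1\<^sub>m r + Q1"
  define P0 where "P0 = 1\<^sub>m r + R1"
  have Pc: "P \<in> carrier_mat r r" and P0c: "P0 \<in> carrier_mat r r" using Q1c R1c by (auto simp: P_def P0_def)
  obtain N where Nc: "N \<in> carrier_mat r r" and PN: "P * N = 1\<^sub>m r" and NP: "N * P = 1\<^sub>m r"
    using inv_exists[OF SQ] unfolding P_def Q1_def by blast
  obtain N0 where N0c: "N0 \<in> carrier_mat r r" and PN0: "P0 * N0 = 1\<^sub>m r" and NP0: "N0 * P0 = 1\<^sub>m r"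
    using inv_exists[OF SQ0] unfolding P0_def R1_def by blast
  have AU: "inv_cayley r U = Q2 * N"
    unfolding inv_cayley_def Q2_def using mat_inv_eq[OF Pc Nc PN NP] by (simp add: P_def Q1_def)
  have AU0: "inv_cayley r U0 = R2 * N0"
    unfolding inv_cayley_def R2_def using mat_inv_eq[OF P0c N0c PN0 NP0] by (simp add: P0_def R1_def)
  define A0 where "A0 = R2 * N0"
  have A0c: "A0 \<in> carrier_mat (p-r) r" using R2c N0c by (simp add: A0_def)
  define T1 where "T1 = (Q2 - R2) * N"
  define T2 where "T2 = A0 * ((R1 - Q1) * N)"
  have T1c: "T1 \<in> carrier_mat (p-r) r" using Q2c R2c Nc unfolding T1_def by (intro mult_carrier_mat[OF minus_carrier_mat[OF R2c]] Nc)
  have T2c: "T2 \<in> carrier_mat (p-r) r" unfolding T2_def by (intro mult_carrier_mat[OF A0c] mult_carrier_mat[OF minus_carrier_mat[OF Q1c]] Nc)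
  have "R1 - Q1 = P0 - P" using R1c Q1c by (intro eq_matI) (auto simp: P_def P0_def)
  hence "(R1 - Q1) * N = P0 * N - 1\<^sub>m r"
    using minus_mult_distrib_mat[OF P0c Pc Nc] PN by simp
  hence "T2 = A0 * (P0 * N) - A0 * 1\<^sub>m r"
    unfolding T2_def using mult_minus_distrib_mat[OF A0c, of "P0 * N" r "1\<^sub>m r"] P0c Nc by simp
  also have "A0 * (P0 * N) = R2 * N"
  proof -
    have "A0 * (P0 * N) = R2 * (N0 * (P0 * N))"
      unfolding A0_def by (rule assoc_mult_mat[OF R2c N0c mult_carrier_mat[OF P0c Nc]])
    also have "N0 * (P0 * N) = (N0 * P0) * N" by (rule assoc_mult_mat[OF N0c P0c Nc, symmetric])
    finally show ?thesis using NP0 Nc by simp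
  qed
  also have "A0 * 1\<^sub>m r = A0" using A0c by simp
  finally have T2e: "T2 = R2 * N - A0" .
  have T1e: "T1 = Q2 * N - R2 * N" unfolding T1_def by (rule minus_mult_distrib_mat[OF Q2c R2c Nc])
  have dec: "inv_cayley r U - inv_cayley r U0 = T1 + T2"
    unfolding AU AU0 T1e T2e A0_def using Q2c R2c Nc N0c by (intro eq_matI) auto
  have NT: "(transpose_mat N *\<^sub>v x) \<bullet> (transpose_mat N *\<^sub>v x) \<le> x \<bullet> x" if x: "x \<in> carrier_vec r" for x
  proof -
    have "P * transpose_mat N = transpose_mat (N * P)"
      using transpose_mult[OF Nc Pc] transpose_one_plus[OF SQ] by (simp add: P_def Q1_def)
    hence "(1\<^sub>m r + blockQ1 r U) * transpose_mat N = 1\<^sub>m r" using NP by (simp add: P_def Q1_def)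
    from inv_contract[OF SQ _ this x] Nc show ?thesis by simp
  qed
  have b1: "frob_norm T1 \<le> frob_norm (Q2 - R2)"
    unfolding T1_def by (rule right_contract[of _ "p-r" r]) (use Q2c R2c Nc NT in auto)
  have b2: "frob_norm T2 \<le> frob_norm (R1 - Q1)"
  proof -
    have "frob_norm T2 \<le> frob_norm ((R1 - Q1) * N)" unfolding T2_def
    proof (rule left_contract[of _ "p-r" r _ r])
      fix x :: "real vec" assume x: "x \<in> carrier_vec r"
      show "(A0 *\<^sub>v x) \<bullet> (A0 *\<^sub>v x) \<le> x \<bullet> x" unfolding A0_def R2_def
        by (rule A_contract[OF assms(4) rp N0c _ x]) (use PN0 in \<open>simp add: P0_def R1_def\<close>)
    qed (use A0c R1c Q1c Nc in auto)
    also have "\<dots> \<le> frob_norm (R1 - Q1)"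
      by (rule right_contract[of _ r r]) (use R1c Q1c Nc NT in auto)
    finally show ?thesis .
  qed
  have b3: "frob_norm (Q2 - R2) \<le> frob_norm (U - U0)"
    unfolding Q2_def R2_def by (rule frob_blocks(2)[OF Uc U0c rp])
  have b4: "frob_norm (R1 - Q1) \<le> frob_norm (U - U0)"
    unfolding Q1_def R1_def using frob_blocks(1)[OF U0c Uc rp] frob_minus_comm[OF Uc U0c] by simp
  have "frob_norm (inv_cayley r U - inv_cayley r U0) \<le> frob_norm T1 + frob_norm T2"
    unfolding dec by (rule frob_triangle[OF T1c T2c])
  thus ?thesis using b1 b2 b3 b4 by simp
qed

end
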